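(* Let $S\subseteq N$ be an $n$-switchable set and let $T_1,\dots,T_l$ be its equivalence classes for the relation of being connected in $S$. Then: (1) each $T_i$ is of the form $T_i=T_{i1}\times\cdots\times T_{in}$ for some subsets $T_{ij}\subseteq[r_j]$; (2) if $a\in T_i$, $b\in N$, $j\in[n]$ and ${\rm s}(j,a,b)\in S$, then ${\rm s}(j,a,b)\in T_i$; (3) if $i\neq j$ in $[l]$, there exist distinct $p_1,\dots,p_m\in[n]$ with $m\ge 3$ such that $T_{ip_k}\cap T_{jp_k}=\emptyset$ for all $k=1,\dots,m$.
   Context: Fix positive integers $n, r_1,\dots,r_n$ and let $N=[r_1]\times\cdots\times[r_n]$. For $a,b\in N$ and $i\in[n]$, ${\rm s}(i,a,b)\in N$ has $i$-th component $b_i$ and other components equal to those of $a$. Let $d(a,b)=\#\{j: a_j\neq b_j\}$. A subset $S\subseteq N$ is $n$-switchable if for all $a,b\in S$ with $d(a,b)=2$ and all $i\in[n]$, ${\rm s}(i,a,b)\in S$. Elements $a,b\in S$ are connected in $S$ if there are $a_0=a,\dots,a_k=b$ in $S$ with $d(a_{j-1},a_j)\le 1$ for all $j$. *)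

theory Defs
  imports "HOL-Library.FuncSet"
begin

definition grid :: "nat \<Rightarrow> (nat \<Rightarrow> nat) \<Rightarrow> (nat \<Rightarrow> nat) set" where
  "grid n r = PiE {1..n} (\<lambda>i. {1..r i})"

definition sw :: "nat \<Rightarrow> (nat \<Rightarrow> nat) \<Rightarrow> (nat \<Rightarrow> nat) \<Rightarrow> (nat \<Rightarrow> nat)" where
  "sw i a b = a(i := b i)"

definition hdist :: "nat \<Rightarrow> (nat \<Rightarrow> nat) \<Rightarrow> (nat \<Rightarrow> nat) \<Rightarrow> nat" where
  "hdist n a b = card {j \<in> {1..n}. a j \<noteq> b j}"

definition switchable :: "nat \<Rightarrow> (nat \<Rightarrow> nat) \<Rightarrow> (nat \<Rightarrow> nat) set \<Rightarrow> bool" where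
  "switchable n r S \<longleftrightarrow> S \<subseteq> grid n r \<and>
     (\<forall>a\<in>S. \<forall>b\<in>S. hdist n a b = 2 \<longrightarrow> (\<forall>i\<in>{1..n}. sw i a b \<in> S))"

definition conn_in :: "nat \<Rightarrow> (nat \<Rightarrow> nat) set \<Rightarrow> (nat \<Rightarrow> nat) \<Rightarrow> (nat \<Rightarrow> nat) \<Rightarrow> bool" where
  "conn_in n S a b \<longleftrightarrow> (\<exists>(k::nat) (f::nat \<Rightarrow> nat \<Rightarrow> nat). f 0 = a \<and> f k = b \<and> (\<forall>j\<le>k. f j \<in> S) \<and>
      (\<forall>j\<in>{1..k}. hdist n (f (j - 1)) (f j) \<le> 1))"

definition conn_classes :: "nat \<Rightarrow> (nat \<Rightarrow> nat) set \<Rightarrow> (nat \<Rightarrow> nat) set set" where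
  "conn_classes n S = S // {(a, b). conn_in n S a b}"

end

theory Submission
  imports Defs
begin

definition stp :: "nat \<Rightarrow> (nat \<Rightarrow> nat) set \<Rightarrow> (nat \<Rightarrow> nat) \<Rightarrow> (nat \<Rightarrow> nat) \<Rightarrow> bool" where
  "stp n S x y \<longleftrightarrow> x \<in> S \<and> y \<in> S \<and> hdist n x y \<le> 1"

definition btw :: "nat \<Rightarrow> (nat \<Rightarrow> nat) \<Rightarrow> (nat \<Rightarrow> nat) \<Rightarrow> (nat \<Rightarrow> nat) set" where
  "btw n x y = {z. z \<in> extensional {1..n} \<and> (\<forall>j\<in>{1..n}. z j = x j \<or> z j = y j)}"

lemma hdist_sym: "hdist n a b = hdist n b a"
  unfolding hdist_def by (metis (mono_tags, lifting))

lemma hdist_upd: "q \<in> {1..n} \<Longrightarrow> hdist n x (x(q:=v)) \<le> 1"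
proof -
  have "{j \<in> {1..n}. x j \<noteq> (x(q:=v)) j} \<subseteq> {q}" by auto
  then have "card {j \<in> {1..n}. x j \<noteq> (x(q:=v)) j} \<le> card {q}" by (intro card_mono) auto
  then show ?thesis unfolding hdist_def by simp
qed

lemma hdist_le1:
  assumes "x \<in> extensional {1..n}" "y \<in> extensional {1..n}" "hdist n x y \<le> 1"
  shows "y = x \<or> (\<exists>q\<in>{1..n}. y = x(q := y q))"
proof -
  let ?D = "{j \<in> {1..n}. x j \<noteq> y j}"
  have fin: "finite ?D" by simp
  have c: "card ?D \<le> 1" using assms(3) unfolding hdist_def .
  have agree: "y j = x j" if "j \<notin> ?D" for j
  proof (cases "j \<in> {1..n}")
    case True
    have "x j = y j"
    proof (rule ccontr)
      assume "x j \<noteq> y j"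
      then have "j \<in> ?D" using True by (rule_tac CollectI, rule_tac conjI)
      then show False using that by (rule notE[rotated])
    qed
    then show ?thesis by (rule sym)
  next
    case False
    have "x j = undefined" by (rule extensional_arb[OF assms(1) False])
    moreover have "y j = undefined" by (rule extensional_arb[OF assms(2) False])
    ultimately show ?thesis by (simp only:)
  qed
  show ?thesis
  proof (cases "card ?D = 0")
    case True
    then have e: "?D = {}" using fin by simp
    have "y = x"
    proof (rule ext)
      fix j have "j \<notin> ?D" by (subst e) simp
      then show "y j = x j" by (rule agree)
    qed
    then show ?thesis by (rule disjI1)
  next
    case False
    then have "card ?D = 1" using c by linarith
    then obtain q where q: "?D = {q}" by (rule card_1_singletonE)
    have "q \<in> ?D" by (subst q) simp
    then have qn: "q \<in> {1..n}" by simp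
    have yq: "y = x(q := y q)"
    proof (rule ext)
      fix j show "y j = (x(q := y q)) j"
      proof (cases "j = q")
        case False
        then have "j \<notin> {q}" by simp
        then have "j \<notin> ?D" by (subst q)
        then have "y j = x j" by (rule agree)
        then show ?thesis using False by simp
      qed simp
    qed
    show ?thesis by (rule disjI2, rule bexI[of _ q], rule yq, rule qn)
  qed
qed

lemma hdist_2:
  assumes "p \<noteq> q" "p \<in> {1..n}" "q \<in> {1..n}" "\<forall>j\<in>{1..n}. (x j \<noteq> y j \<longleftrightarrow> j = p \<or> j = q)"
  shows "hdist n x y = 2"
proof -
  have "{j \<in> {1..n}. x j \<noteq> y j} = {p, q}" using assms by auto
  then show ?thesis unfolding hdist_def using assms(1) by simp
qed

lemma sw_use:
  assumes "switchable n r S" "x \<in> S" "y \<in> S" "hdist n x y = 2" "q \<in> {1..n}"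
  shows "x(q := y q) \<in> S"
proof -
  have h: "\<forall>a\<in>S. \<forall>b\<in>S. hdist n a b = 2 \<longrightarrow> (\<forall>i\<in>{1..n}. sw i a b \<in> S)"
    using assms(1) unfolding switchable_def by (rule conjunct2)
  have "hdist n x y = 2 \<longrightarrow> (\<forall>i\<in>{1..n}. sw i x y \<in> S)"
    using h assms(2,3) by (rule_tac bspec[OF bspec[OF h]])
  then have "\<forall>i\<in>{1..n}. sw i x y \<in> S" using assms(4) by (rule mp)
  then have "sw q x y \<in> S" using assms(5) by (rule bspec)
  then show ?thesis unfolding sw_def .
qed

lemma S_grid: "switchable n r S \<Longrightarrow> x \<in> S \<Longrightarrow> x \<in> grid n r"
  unfolding switchable_def by (erule conjE, erule subsetD)

lemma S_ext: "switchable n r S \<Longrightarrow> x \<in> S \<Longrightarrow> x \<in> extensional {1..n}"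
proof -
  assume "switchable n r S" "x \<in> S"
  then have "x \<in> grid n r" by (rule S_grid)
  then have "x \<in> PiE {1..n} (\<lambda>i. {1..r i})" unfolding grid_def .
  then show ?thesis by (rule PiE_iff[THEN iffD1, THEN conjunct2])
qed

lemma conn_iff: "conn_in n S a b \<longleftrightarrow> a \<in> S \<and> (stp n S)\<^sup>*\<^sup>* a b"
proof
  assume "conn_in n S a b"
  then obtain k :: nat and f :: "nat \<Rightarrow> nat \<Rightarrow> nat" where f: "f 0 = a" "f k = b" "\<forall>j\<le>k. f j \<in> S"
    "\<forall>j\<in>{1..k}. hdist n (f (j - 1)) (f j) \<le> 1" unfolding conn_in_def by blast
  have "\<forall>i. i \<le> k \<longrightarrow> (stp n S)\<^sup>*\<^sup>* (f 0) (f i)"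
  proof
    fix i show "i \<le> k \<longrightarrow> (stp n S)\<^sup>*\<^sup>* (f 0) (f i)"
    proof (induction i)
      case (Suc i)
      show ?case
      proof
        assume "Suc i \<le> k"
        then have "stp n S (f i) (f (Suc i))" using f(3,4) unfolding stp_def
          by (metis Suc_leD atLeastAtMost_iff diff_Suc_1 le_add1 plus_1_eq_Suc)
        then show "(stp n S)\<^sup>*\<^sup>* (f 0) (f (Suc i))"
          using Suc \<open>Suc i \<le> k\<close> by (meson Suc_leD rtranclp.rtrancl_into_rtrancl)
      qed
    qed simp
  qed
  then show "a \<in> S \<and> (stp n S)\<^sup>*\<^sup>* a b" using f by auto
next
  assume h: "a \<in> S \<and> (stp n S)\<^sup>*\<^sup>* a b"
  then have "(stp n S)\<^sup>*\<^sup>* a b" by blast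
  then show "conn_in n S a b"
  proof (induction rule: rtranclp_induct)
    case base
    show ?case unfolding conn_in_def
      by (rule exI[of _ 0], rule exI[of _ "\<lambda>_. a"]) (use h in auto)
  next
    case (step y z)
    then obtain k :: nat and f :: "nat \<Rightarrow> nat \<Rightarrow> nat" where f: "f 0 = a" "f k = y" "\<forall>j\<le>k. f j \<in> S"
      "\<forall>j\<in>{1..k}. hdist n (f (j - 1)) (f j) \<le> 1" unfolding conn_in_def by blast
    define g where "g = f(Suc k := z)"
    have "g 0 = a" "g (Suc k) = z" using f unfolding g_def by auto
    moreover have "\<forall>j\<le>Suc k. g j \<in> S" using f step(2) unfolding g_def stp_def
      by (simp add: le_Suc_eq)
    moreover have "\<forall>j\<in>{1..Suc k}. hdist n (g (j - 1)) (g j) \<le> 1"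
    proof
      fix j assume j: "j \<in> {1..Suc k}"
      show "hdist n (g (j - 1)) (g j) \<le> 1"
      proof (cases "j = Suc k")
        case True
        then show ?thesis using step(2) f(2) unfolding g_def stp_def by simp
      next
        case False
        then have "j \<in> {1..k}" using j by auto
        then show ?thesis using f(4) False unfolding g_def by auto
      qed
    qed
    ultimately show ?case unfolding conn_in_def by blast
  qed
qed


lemma coreB:
  assumes sw: "switchable n r S" and good: "btw n x y \<subseteq> S" and yS: "y \<in> S"
    and y'S: "y(q:=v) \<in> S" and q: "q \<in> {1..n}"
  shows "m \<in> btw n x y \<Longrightarrow> m q = y q \<Longrightarrow> m(q:=v) \<in> S"
proof -
  have "\<And>m. card {j \<in> {1..n}. m j \<noteq> y j} = d \<Longrightarrow> m \<in> btw n x y \<Longrightarrow> m q = y q \<Longrightarrow> m(q:=v) \<in> S" for d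
  proof (induction d)
    case 0
    have fin: "finite {j \<in> {1..n}. m j \<noteq> y j}" by simp
    have e: "{j \<in> {1..n}. m j \<noteq> y j} = {}" using 0(1) fin by simp
    have mext: "m \<in> extensional {1..n}" using 0 unfolding btw_def by blast
    have yext: "y \<in> extensional {1..n}" using S_ext[OF sw yS] .
    have "m = y"
    proof (rule extensionalityI[OF mext yext])
      fix j assume j: "j \<in> {1..n}"
      show "m j = y j"
      proof (rule ccontr)
        assume "m j \<noteq> y j"
        then have "j \<in> {j \<in> {1..n}. m j \<noteq> y j}" using j by simp
        with e have "j \<in> ({}::nat set)" by (rule subst[where P="\<lambda>A. j \<in> A"])
        then show False by simp
      qed
    qed
    then show ?case using y'S by (rule ssubst[where P="\<lambda>u. u(q:=v) \<in> S"])
  next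
    case (Suc d m)
    have "{j \<in> {1..n}. m j \<noteq> y j} \<noteq> {}"
    proof
      assume "{j \<in> {1..n}. m j \<noteq> y j} = {}"
      then have "card {j \<in> {1..n}. m j \<noteq> y j} = 0" by (simp only: card.empty)
      then show False using Suc.prems(1) by linarith
    qed
    then obtain p where p: "p \<in> {1..n}" "m p \<noteq> y p" by blast
    have pq: "p \<noteq> q" using p Suc.prems(3) by auto
    define m1 where "m1 = m(p := y p)"
    have m1b: "m1 \<in> btw n x y" using Suc.prems(2) p unfolding m1_def btw_def extensional_def by auto
    have "{j \<in> {1..n}. m1 j \<noteq> y j} = {j \<in> {1..n}. m j \<noteq> y j} - {p}" unfolding m1_def by auto
    then have "card {j \<in> {1..n}. m1 j \<noteq> y j} = d" using Suc.prems(1) p by simp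
    moreover have "m1 q = y q" using Suc.prems(3) pq unfolding m1_def by simp
    ultimately have IH: "m1(q:=v) \<in> S" using Suc.IH m1b by blast
    have mS: "m \<in> S" using Suc.prems(2) good by blast
    show ?case
    proof (cases "v = y q")
      case True
      then have "m(q:=v) = m" using Suc.prems(3) by auto
      then show ?thesis using mS by simp
    next
      case False
      have "hdist n m (m1(q:=v)) = 2"
        by (rule hdist_2[OF pq p(1) q]) (use False Suc.prems(3) p(2) pq in \<open>auto simp: m1_def\<close>)
      from sw_use[OF sw mS IH this q] have "m(q := (m1(q:=v)) q) \<in> S" .
      moreover have "(m1(q:=v)) q = v" by (rule fun_upd_same)
      ultimately show ?thesis by (simp only:)
    qed
  qed
  then show "m \<in> btw n x y \<Longrightarrow> m q = y q \<Longrightarrow> m(q:=v) \<in> S" by blast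
qed

lemma coreC:
  assumes sw: "switchable n r S" and good: "btw n x y \<subseteq> S" and yS: "y \<in> S"
    and y'S: "y(q:=v) \<in> S" and q: "q \<in> {1..n}"
  shows "btw n x (y(q:=v)) \<subseteq> S"
proof
  fix z assume z: "z \<in> btw n x (y(q:=v))"
  define m where "m = z(q := y q)"
  have mb: "m \<in> btw n x y" using z q unfolding m_def btw_def extensional_def by auto
  show "z \<in> S"
  proof (cases "z q = v")
    case True
    then have "z = m(q:=v)" unfolding m_def by auto
    then show ?thesis using coreB[OF sw good yS y'S q mb] unfolding m_def by simp
  next
    case False
    have "\<forall>j\<in>{1..n}. z j = x j \<or> z j = y j"
    proof
      fix j assume j: "j \<in> {1..n}"
      then have "z j = x j \<or> z j = (y(q:=v)) j" using z unfolding btw_def by blast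
      then show "z j = x j \<or> z j = y j" using False by (cases "j = q") auto
    qed
    then have "z \<in> btw n x y" using z unfolding btw_def by blast
    then show ?thesis using good by blast
  qed
qed

lemma coreD:
  assumes sw: "switchable n r S" and aS: "a \<in> S" and R: "(stp n S)\<^sup>*\<^sup>* a b"
  shows "btw n a b \<subseteq> S"
  using R
proof (induction rule: rtranclp_induct)
  case base
  have "btw n a a \<subseteq> {a}"
  proof
    fix z assume "z \<in> btw n a a"
    then have ze: "z \<in> extensional {1..n}" and za: "\<forall>j\<in>{1..n}. z j = a j" unfolding btw_def by auto
    have "z = a" by (rule extensionalityI[OF ze S_ext[OF sw aS]]) (use za in blast)
    then show "z \<in> {a}" by simp
  qed
  then show ?case using aS by blast
next
  case (step y z)
  have yS: "y \<in> S" and zS: "z \<in> S" and h: "hdist n y z \<le> 1" using step(2) unfolding stp_def by auto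
  from hdist_le1[OF S_ext[OF sw yS] S_ext[OF sw zS] h] show ?case
  proof
    assume "z = y" then show ?thesis using step(3) by simp
  next
    assume "\<exists>q\<in>{1..n}. z = y(q := z q)"
    then obtain q where q: "q \<in> {1..n}" "z = y(q := z q)" by blast
    have "y(q := z q) \<in> S" using zS q(2) by simp
    from coreC[OF sw step(3) yS this q(1)] q(2) show ?thesis by simp
  qed
qed


lemma R_sym: "(stp n S)\<^sup>*\<^sup>* x y \<Longrightarrow> (stp n S)\<^sup>*\<^sup>* y x"
proof (induction rule: rtranclp_induct)
  case (step y z)
  have "hdist n z y = hdist n y z" by (rule hdist_sym)
  then have "stp n S z y" using step(2) unfolding stp_def by simp
  then show ?case using step(3) by (meson converse_rtranclp_into_rtranclp)
qed simp

lemma R_S: "a \<in> S \<Longrightarrow> (stp n S)\<^sup>*\<^sup>* a b \<Longrightarrow> b \<in> S"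
proof -
  assume a: "a \<in> S" and r: "(stp n S)\<^sup>*\<^sup>* a b"
  from r a show "b \<in> S" by (induction rule: rtranclp_induct) (auto simp: stp_def)
qed

lemma same_cl:
  assumes "(stp n S)\<^sup>*\<^sup>* a e" "(stp n S)\<^sup>*\<^sup>* a' e"
  shows "{b. (stp n S)\<^sup>*\<^sup>* a b} = {b. (stp n S)\<^sup>*\<^sup>* a' b}"
proof -
  have "(stp n S)\<^sup>*\<^sup>* a a'" "(stp n S)\<^sup>*\<^sup>* a' a"
    using rtranclp_trans[OF assms(1) R_sym[OF assms(2)]] rtranclp_trans[OF assms(2) R_sym[OF assms(1)]] by simp_all
  then show ?thesis by (auto intro: rtranclp_trans)
qed

lemma class_char:
  assumes "T \<in> conn_classes n S"
  shows "\<exists>a\<in>S. T = {b. (stp n S)\<^sup>*\<^sup>* a b}"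
  using assms unfolding conn_classes_def quotient_def conn_iff by auto

lemma box:
  assumes sw: "switchable n r S" and aS: "a \<in> S"
  shows "{b. (stp n S)\<^sup>*\<^sup>* a b} = PiE {1..n} (\<lambda>j. (\<lambda>x. x j) ` {b. (stp n S)\<^sup>*\<^sup>* a b})"
    (is "?C = PiE {1..n} ?F")
proof
  show "?C \<subseteq> PiE {1..n} ?F"
  proof
    fix b assume "b \<in> ?C"
    then have "b \<in> S" "b \<in> ?C" using R_S aS by auto
    then show "b \<in> PiE {1..n} ?F" using S_ext[OF sw] by (auto simp: PiE_iff)
  qed
next
  show "PiE {1..n} ?F \<subseteq> ?C"
  proof
    fix x assume x: "x \<in> PiE {1..n} ?F"
    have "finite K \<Longrightarrow> K \<subseteq> {1..n} \<Longrightarrow> (\<lambda>j. if j \<in> K then x j else a j) \<in> ?C" for K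
    proof (induction K rule: finite_induct)
      case empty then show ?case by simp
    next
      case (insert q K)
      define w where "w = (\<lambda>j. if j \<in> K then x j else a j)"
      have wC: "w \<in> ?C" using insert unfolding w_def by simp
      have q: "q \<in> {1..n}" using insert by simp
      then have "x q \<in> ?F q" using x by (auto simp: PiE_iff)
      then obtain c where cC: "c \<in> ?C" and xq: "x q = c q" by auto
      have "(stp n S)\<^sup>*\<^sup>* w a" using wC R_sym by simp
      then have Rwc: "(stp n S)\<^sup>*\<^sup>* w c" using cC by (simp add: rtranclp_trans)
      have wS: "w \<in> S" using wC R_S aS by blast
      have good: "btw n w c \<subseteq> S" using coreD[OF sw wS Rwc] .
      have "w(q := c q) \<in> btw n w c" using S_ext[OF sw wS] q unfolding btw_def extensional_def by auto
      then have wqS: "w(q := c q) \<in> S" using good by blast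
      have "stp n S w (w(q := c q))" using wS wqS hdist_upd[OF q] unfolding stp_def by blast
      then have "w(q := c q) \<in> ?C" using wC by (simp add: rtranclp.rtrancl_into_rtrancl)
      moreover have "(\<lambda>j. if j \<in> insert q K then x j else a j) = w(q := c q)"
        using xq unfolding w_def by auto
      ultimately show ?case by simp
    qed
    from this[of "{1..n}"] have "(\<lambda>j. if j \<in> {1..n} then x j else a j) \<in> ?C" by simp
    moreover have "(\<lambda>j. if j \<in> {1..n} then x j else a j) = x"
    proof (rule ext)
      fix j show "(if j \<in> {1..n} then x j else a j) = x j"
      proof (cases "j \<in> {1..n}")
        case False
        have "x j = undefined" using x False by (rule PiE_arb)
        moreover have "a j = undefined" using S_ext[OF sw aS] False by (rule extensional_arb)
        ultimately show ?thesis using False by simp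
      qed simp
    qed
    ultimately show "x \<in> ?C" by simp
  qed
qed


lemma sep:
  assumes sw: "switchable n r S" and aS: "a \<in> S" and a'S: "a' \<in> S"
    and ne: "{b. (stp n S)\<^sup>*\<^sup>* a b} \<noteq> {b. (stp n S)\<^sup>*\<^sup>* a' b}"
  shows "\<exists>P \<subseteq> {1..n}. card P \<ge> 3 \<and> (\<forall>p\<in>P. (\<lambda>x. x p) ` {b. (stp n S)\<^sup>*\<^sup>* a b} \<inter>
           (\<lambda>x. x p) ` {b. (stp n S)\<^sup>*\<^sup>* a' b} = {})"
proof (rule ccontr)
  let ?C = "{b. (stp n S)\<^sup>*\<^sup>* a b}" and ?C' = "{b. (stp n S)\<^sup>*\<^sup>* a' b}"
  let ?F = "\<lambda>j. (\<lambda>x. x j) ` ?C" and ?F' = "\<lambda>j. (\<lambda>x. x j) ` ?C'"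
  define P where "P = {p \<in> {1..n}. ?F p \<inter> ?F' p = {}}"
  assume neg: "\<not> ?thesis"
  have Psub: "P \<subseteq> {1..n}" unfolding P_def by auto
  have Pdisj: "\<forall>p\<in>P. ?F p \<inter> ?F' p = {}" unfolding P_def by auto
  have cP: "card P \<le> 2"
  proof (rule ccontr)
    assume "\<not> card P \<le> 2"
    then have "card P \<ge> 3" by simp
    then show False using neg Psub Pdisj by blast
  qed
  define c where "c = (\<lambda>j. SOME v. v \<in> ?F j \<inter> ?F' j)"
  have c: "c j \<in> ?F j \<and> c j \<in> ?F' j" if "j \<in> {1..n}" "j \<notin> P" for j
  proof -
    have "\<exists>v. v \<in> ?F j \<inter> ?F' j" using that unfolding P_def by blast
    then have "c j \<in> ?F j \<inter> ?F' j" unfolding c_def by (rule someI_ex)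
    then show ?thesis by simp
  qed
  define b where "b = (\<lambda>j. if j \<in> {1..n} then (if j \<in> P then a j else c j) else undefined)"
  define b' where "b' = (\<lambda>j. if j \<in> {1..n} then (if j \<in> P then a' j else c j) else undefined)"
  have "a \<in> ?C" "a' \<in> ?C'" by auto
  then have "b \<in> PiE {1..n} ?F" "b' \<in> PiE {1..n} ?F'"
    unfolding b_def b'_def using c by (auto simp: PiE_iff extensional_def)
  then have bC: "b \<in> ?C" and bC': "b' \<in> ?C'" using box[OF sw aS] box[OF sw a'S] by auto
  have bS: "b \<in> S" and b'S: "b' \<in> S" using bC bC' R_S aS a'S by blast+
  have diff: "{j \<in> {1..n}. b j \<noteq> b' j} = P"
  proof -
    have "j \<in> P \<Longrightarrow> a j \<noteq> a' j" for j
      using \<open>a \<in> ?C\<close> \<open>a' \<in> ?C'\<close> unfolding P_def by blast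
    then show ?thesis unfolding b_def b'_def P_def by auto
  qed
  have finP: "finite P" unfolding P_def by simp
  have contra: "False" if "(stp n S)\<^sup>*\<^sup>* a' e" "(stp n S)\<^sup>*\<^sup>* a e" for e
    using same_cl[OF that(2) that(1)] ne by simp
  consider "card P = 0" | "card P = 1" | "card P = 2" using cP by linarith
  then show False
  proof cases
    case 1
    then have "P = {}" using finP by simp
    then have "b = b'" using diff unfolding b_def b'_def by (intro ext) auto
    then show False using contra bC bC' by auto
  next
    case 2
    then have "hdist n b b' = 1" using diff unfolding hdist_def by simp
    then have "stp n S b b'" using bS b'S unfolding stp_def by simp
    then have "(stp n S)\<^sup>*\<^sup>* a b'" using bC by (simp add: rtranclp.rtrancl_into_rtrancl)
    then show False using contra bC' by auto
  next
    case 3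
    then obtain p q where pq: "P = {p, q}" "p \<noteq> q" by (meson card_2_iff)
    have q: "q \<in> {1..n}" using pq unfolding P_def by blast
    have "hdist n b b' = 2" using diff 3 unfolding hdist_def by simp
    from sw_use[OF sw bS b'S this q] have s: "b(q := b' q) \<in> S" .
    have "stp n S b (b(q := b' q))" using bS s hdist_upd[OF q] unfolding stp_def by blast
    then have "b(q := b' q) \<in> ?C" using bC by (simp add: rtranclp.rtrancl_into_rtrancl)
    then have "(b(q := b' q)) q \<in> ?F q" by (rule imageI)
    then have "b' q \<in> ?F q" by simp
    moreover have "b' q \<in> ?F' q" using bC' by blast
    moreover have "q \<in> P" using pq by simp
    ultimately show False unfolding P_def by blast
  qed
qed

theorem theorem5p1:
  fixes n :: nat and r :: "nat \<Rightarrow> nat" and S :: "(nat \<Rightarrow> nat) set"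
  assumes "n > 0" and "\<forall>i\<in>{1..n}. r i > 0"
    and "switchable n r S"
  shows "\<exists>F :: (nat \<Rightarrow> nat) set \<Rightarrow> nat \<Rightarrow> nat set.
    (\<forall>T\<in>conn_classes n S. (\<forall>j\<in>{1..n}. F T j \<subseteq> {1..r j}) \<and> T = PiE {1..n} (F T)) \<and>
    (\<forall>T\<in>conn_classes n S. \<forall>a\<in>T. \<forall>b\<in>grid n r. \<forall>j\<in>{1..n}.
        sw j a b \<in> S \<longrightarrow> sw j a b \<in> T) \<and>
    (\<forall>T\<in>conn_classes n S. \<forall>T'\<in>conn_classes n S. T \<noteq> T' \<longrightarrow>
        (\<exists>P \<subseteq> {1..n}. card P \<ge> 3 \<and> (\<forall>p\<in>P. F T p \<inter> F T' p = {})))"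
proof (rule exI[of _ "\<lambda>T j. (\<lambda>x. x j) ` T"], intro conjI ballI impI)
  note sw = assms(3)
  fix T assume T: "T \<in> conn_classes n S"
  then obtain a where aS: "a \<in> S" and Ta: "T = {b. (stp n S)\<^sup>*\<^sup>* a b}" using class_char by blast
  {
    fix j assume j: "j \<in> {1..n}"
    show "(\<lambda>x. x j) ` T \<subseteq> {1..r j}"
    proof
      fix v assume "v \<in> (\<lambda>x. x j) ` T"
      then obtain x where "x \<in> T" "v = x j" by blast
      then have "x \<in> grid n r" using Ta R_S aS S_grid[OF sw] by blast
      then show "v \<in> {1..r j}" using j \<open>v = x j\<close> unfolding grid_def by auto
    qed
  }
  show "T = PiE {1..n} (\<lambda>j. (\<lambda>x. x j) ` T)" using box[OF sw aS] Ta by simp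
  {
    fix x b j assume x: "x \<in> T" and b: "b \<in> grid n r" and j: "j \<in> {1..n}" and s: "sw j x b \<in> S"
    have xS: "x \<in> S" using x Ta R_S aS by blast
    have "stp n S x (sw j x b)" using xS s hdist_upd[OF j] unfolding stp_def sw_def by blast
    then show "sw j x b \<in> T" using x Ta by (simp add: rtranclp.rtrancl_into_rtrancl)
  }
  {
    fix T' assume T': "T' \<in> conn_classes n S" and ne: "T \<noteq> T'"
    then obtain a' where a'S: "a' \<in> S" and Ta': "T' = {b. (stp n S)\<^sup>*\<^sup>* a' b}" using class_char by blast
    show "\<exists>P \<subseteq> {1..n}. card P \<ge> 3 \<and> (\<forall>p\<in>P. (\<lambda>x. x p) ` T \<inter> (\<lambda>x. x p) ` T' = {})"
      using sep[OF sw aS a'S] ne Ta Ta' by simp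
  }
qed

end
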